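(* Let $D$ be a connected locally finite C-homogeneous digraph such that $N^+(x)$ and $N^-(x)$ are independent sets for all $x\in VD$. If $D$ contains a directed triangle as a subdigraph, then $|N^+(x)|=|N^-(x)|$ for every $x\in VD$.
   Context: A digraph has an irreflexive, antisymmetric edge relation; connectedness and local finiteness refer to the underlying undirected graph. $D$ is C-homogeneous if every isomorphism between finite connected induced subdigraphs extends to an automorphism of $D$. $N^+(x)=\{y: xy\in ED\}$, $N^-(x)=\{y: yx\in ED\}$; a set is independent if no two of its vertices are adjacent. *)

theory Defs
  imports Main
begin

definition digraph :: "'a set \<Rightarrow> ('a \<times> 'a) set \<Rightarrow> bool" where
  "digraph V E \<longleftrightarrow> E \<subseteq> V \<times> V \<and> (\<forall>x. (x, x) \<notin> E) \<and> (\<forall>x y. (x, y) \<in> E \<longrightarrow> (y, x) \<notin> E)"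

definition out_nbr :: "('a \<times> 'a) set \<Rightarrow> 'a \<Rightarrow> 'a set" where
  "out_nbr E x = {y. (x, y) \<in> E}"

definition in_nbr :: "('a \<times> 'a) set \<Rightarrow> 'a \<Rightarrow> 'a set" where
  "in_nbr E x = {y. (y, x) \<in> E}"

definition dconnected :: "'a set \<Rightarrow> ('a \<times> 'a) set \<Rightarrow> bool" where
  "dconnected A E \<longleftrightarrow> (\<forall>x\<in>A. \<forall>y\<in>A. (x, y) \<in> (E \<union> E\<inverse>)\<^sup>*)"

definition locally_finite :: "'a set \<Rightarrow> ('a \<times> 'a) set \<Rightarrow> bool" where
  "locally_finite V E \<longleftrightarrow> (\<forall>x\<in>V. finite (out_nbr E x \<union> in_nbr E x))"

definition independent :: "('a \<times> 'a) set \<Rightarrow> 'a set \<Rightarrow> bool" where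
  "independent E S \<longleftrightarrow> (\<forall>x\<in>S. \<forall>y\<in>S. (x, y) \<notin> E)"

definition induced :: "('a \<times> 'a) set \<Rightarrow> 'a set \<Rightarrow> ('a \<times> 'a) set" where
  "induced E A = E \<inter> (A \<times> A)"

definition iso_on :: "('a \<times> 'a) set \<Rightarrow> ('a \<Rightarrow> 'a) \<Rightarrow> 'a set \<Rightarrow> 'a set \<Rightarrow> bool" where
  "iso_on E f A B \<longleftrightarrow> bij_betw f A B \<and> (\<forall>x\<in>A. \<forall>y\<in>A. (x, y) \<in> E \<longleftrightarrow> (f x, f y) \<in> E)"

definition automorphism :: "'a set \<Rightarrow> ('a \<times> 'a) set \<Rightarrow> ('a \<Rightarrow> 'a) \<Rightarrow> bool" where
  "automorphism V E g \<longleftrightarrow> iso_on E g V V"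

definition C_homogeneous :: "'a set \<Rightarrow> ('a \<times> 'a) set \<Rightarrow> bool" where
  "C_homogeneous V E \<longleftrightarrow>
    (\<forall>A B f. A \<subseteq> V \<and> B \<subseteq> V \<and> finite A \<and> finite B
       \<and> dconnected A (induced E A) \<and> dconnected B (induced E B) \<and> iso_on E f A B
       \<longrightarrow> (\<exists>g. automorphism V E g \<and> (\<forall>x\<in>A. g x = f x)))"

end

theory Submission
  imports Defs
begin

definition tri :: "('a \<times> 'a) set \<Rightarrow> 'a \<Rightarrow> 'a \<Rightarrow> 'a set" where
  "tri E u v = {w. (v, w) \<in> E \<and> (w, u) \<in> E}"

lemma tri_aut:
  assumes dg: "digraph V E" and aut: "automorphism V E g" and e: "(a, b) \<in> E"
  shows "card (tri E (g a) (g b)) = card (tri E a b)"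
proof -
  have V: "E \<subseteq> V \<times> V" using dg unfolding digraph_def by blast
  have ab: "a \<in> V" "b \<in> V" using e V by auto
  have bij: "bij_betw g V V" and pres: "\<forall>x\<in>V. \<forall>y\<in>V. (x, y) \<in> E \<longleftrightarrow> (g x, g y) \<in> E"
    using aut unfolding automorphism_def iso_on_def by auto
  have S: "tri E a b \<subseteq> V" using V unfolding tri_def by auto
  have "g ` tri E a b = tri E (g a) (g b)"
  proof
    show "g ` tri E a b \<subseteq> tri E (g a) (g b)"
      using S ab pres unfolding tri_def by auto
  next
    show "tri E (g a) (g b) \<subseteq> g ` tri E a b"
    proof
      fix w' assume w': "w' \<in> tri E (g a) (g b)"
      then have "w' \<in> V" using V unfolding tri_def by auto
      then obtain w where w: "w \<in> V" "w' = g w" using bij unfolding bij_betw_def by auto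
      then show "w' \<in> g ` tri E a b" using w' ab pres unfolding tri_def by auto
    qed
  qed
  moreover have "inj_on g (tri E a b)"
    using bij S unfolding bij_betw_def by (meson inj_on_subset)
  ultimately show ?thesis by (metis card_image)
qed

lemma edge_trans:
  assumes dg: "digraph V E" and ch: "C_homogeneous V E"
    and e1: "(a, b) \<in> E" and e2: "(u, v) \<in> E"
  shows "\<exists>g. automorphism V E g \<and> g a = u \<and> g b = v"
proof -
  have V: "E \<subseteq> V \<times> V" and irr: "\<forall>x. (x, x) \<notin> E" and asym: "\<forall>x y. (x, y) \<in> E \<longrightarrow> (y, x) \<notin> E"
    using dg unfolding digraph_def by auto
  have ne: "a \<noteq> b" "u \<noteq> v" using e1 e2 irr by auto
  define f where "f = (\<lambda>x. if x = a then u else v)"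
  have con: "dconnected {x, y} (induced E {x, y})" if "(x, y) \<in> E" for x y
  proof -
    have "(x, y) \<in> induced E {x, y}" using that unfolding induced_def by auto
    then have "(x, y) \<in> (induced E {x, y} \<union> (induced E {x, y})\<inverse>)\<^sup>*"
      "(y, x) \<in> (induced E {x, y} \<union> (induced E {x, y})\<inverse>)\<^sup>*" by auto
    then show ?thesis unfolding dconnected_def by auto
  qed
  have iso: "iso_on E f {a, b} {u, v}"
    unfolding iso_on_def bij_betw_def f_def using ne e1 e2 irr asym by (auto simp: inj_on_def)
  have "\<exists>g. automorphism V E g \<and> (\<forall>x\<in>{a,b}. g x = f x)"
  proof -
    have "\<forall>A B f. A \<subseteq> V \<and> B \<subseteq> V \<and> finite A \<and> finite B
       \<and> dconnected A (induced E A) \<and> dconnected B (induced E B) \<and> iso_on E f A B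
       \<longrightarrow> (\<exists>g. automorphism V E g \<and> (\<forall>x\<in>A. g x = f x))"
      using ch unfolding C_homogeneous_def by blast
    then have "{a,b} \<subseteq> V \<and> {u,v} \<subseteq> V \<and> finite {a,b} \<and> finite {u,v}
       \<and> dconnected {a,b} (induced E {a,b}) \<and> dconnected {u,v} (induced E {u,v}) \<and> iso_on E f {a,b} {u,v}
       \<longrightarrow> (\<exists>g. automorphism V E g \<and> (\<forall>x\<in>{a,b}. g x = f x))" by blast
    then show ?thesis using V e1 e2 con[OF e1] con[OF e2] iso by auto
  qed
  then show ?thesis using ne unfolding f_def by auto
qed

theorem lemma4p11:
  fixes V :: "'a set" and E :: "('a \<times> 'a) set"
  assumes "digraph V E"
    and "dconnected V E"
    and "locally_finite V E"
    and "C_homogeneous V E"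
    and "\<forall>x\<in>V. independent E (out_nbr E x) \<and> independent E (in_nbr E x)"
    and "\<exists>a\<in>V. \<exists>b\<in>V. \<exists>c\<in>V. a \<noteq> b \<and> b \<noteq> c \<and> a \<noteq> c \<and> (a, b) \<in> E \<and> (b, c) \<in> E \<and> (c, a) \<in> E"
  shows "\<forall>x\<in>V. card (out_nbr E x) = card (in_nbr E x)"
proof
  fix x assume x: "x \<in> V"
  have V: "E \<subseteq> V \<times> V" using assms(1) unfolding digraph_def by blast
  obtain a b c where abc: "(a, b) \<in> E" "(b, c) \<in> E" "(c, a) \<in> E" using assms(6) by blast
  have fin: "finite (out_nbr E y)" "finite (in_nbr E y)" if "y \<in> V" for y
    using assms(3) that unfolding locally_finite_def by auto
  define t where "t = card (tri E a b)"
  have tconst: "card (tri E u v) = t" if uv: "(u, v) \<in> E" for u v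
  proof -
    obtain g where g: "automorphism V E g" "g a = u" "g b = v"
      using edge_trans[OF assms(1) assms(4) abc(1) uv] by blast
    show ?thesis using tri_aut[OF assms(1) g(1) abc(1)] g unfolding t_def by simp
  qed
  have "b \<in> V" using abc V by auto
  have tfin: "finite (tri E a b)" using fin(1)[OF \<open>b \<in> V\<close>]
    by (rule finite_subset[rotated]) (auto simp: tri_def out_nbr_def)
  have "c \<in> tri E a b" using abc unfolding tri_def by auto
  then have tpos: "t > 0" unfolding t_def using tfin card_gt_0_iff by blast
  define P where "P = Sigma (out_nbr E x) (\<lambda>y. tri E x y)"
  define Q where "Q = Sigma (in_nbr E x) (\<lambda>z. tri E z x)"
  have PQ: "P = (\<lambda>(z, y). (y, z)) ` Q"
    unfolding P_def Q_def tri_def out_nbr_def in_nbr_def by auto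
  have injQ: "inj_on (\<lambda>(z, y). (y, z)) Q" by (auto simp: inj_on_def)
  have trifin: "finite (tri E u v)" if "v \<in> V" for u v
    using fin(1)[OF that] by (rule finite_subset[rotated]) (auto simp: tri_def out_nbr_def)
  have "card P = (\<Sum>y\<in>out_nbr E x. card (tri E x y))"
    unfolding P_def using fin[OF x] trifin V by (intro card_SigmaI) (auto simp: out_nbr_def)
  also have "\<dots> = card (out_nbr E x) * t" using tconst by (simp add: out_nbr_def)
  finally have P1: "card P = card (out_nbr E x) * t" .
  have "card Q = (\<Sum>z\<in>in_nbr E x. card (tri E z x))"
    unfolding Q_def using fin[OF x] trifin x by (intro card_SigmaI) auto
  also have "\<dots> = card (in_nbr E x) * t" using tconst by (simp add: in_nbr_def)
  finally have Q1: "card Q = card (in_nbr E x) * t" .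
  have "card P = card Q" using PQ injQ card_image by metis
  then show "card (out_nbr E x) = card (in_nbr E x)" using P1 Q1 tpos by simp
qed

end
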